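(* Let $n$ be even and let $N$ be a $4$-net of order $n$ with parallel classes $\Pi_0,\dots,\Pi_3$ and a relation $\mathcal R$ of type $(\lambda_0,\dots,\lambda_3)$. Put $g_i=\frac n2-\lambda_i$. Then for every $\mathbf b=(b_0,\dots,b_3)\in\{0,1\}^4$ with an even number of ones, $$t_{\mathbf b}=\frac18 n^2+\frac14 n\sum_{i=0}^{3}(-1)^{b_i}g_i+\frac14\sum_{0\le i<j\le 3}(-1)^{b_i+b_j}g_ig_j .$$
   Context: A $k$-net of order $n$ is a set $P$ of $n^2$ points together with a set $L$ of $kn$ lines (subsets of $P$), each line containing $n$ points and each point lying on $k$ lines, such that $L$ partitions into $k$ parallel classes $\Pi_0,\dots,\Pi_{k-1}$ of $n$ pairwise disjoint lines each, and any two lines from different parallel classes meet in exactly one point. A relation on a net is a set $\mathcal R\subseteq L$ such that every point lies on an even number of lines of $\mathcal R$. Its type is $(\lambda_0,\dots,\lambda_{k-1})$ with $\lambda_i=|\mathcal R\cap\Pi_i|$. The type of a point $p$ is the binary string $\mathbf b\in\{0,1\}^k$ with $b_i=1$ iff the line of $\Pi_i$ through $p$ lies in $\mathcal R$; $t_{\mathbf b}$ is the number of points of type $\mathbf b$. *)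

theory Defs
  imports Complex_Main
begin

definition is_net :: "nat \<Rightarrow> nat \<Rightarrow> 'p set \<Rightarrow> 'p set set \<Rightarrow> (nat \<Rightarrow> 'p set set) \<Rightarrow> bool" where
  "is_net k n P L Pi \<longleftrightarrow>
     finite P \<and> card P = n^2 \<and>
     card L = k * n \<and>
     (\<forall>l\<in>L. l \<subseteq> P \<and> card l = n) \<and>
     (\<forall>p\<in>P. card {l\<in>L. p \<in> l} = k) \<and>
     L = (\<Union>i<k. Pi i) \<and>
     (\<forall>i<k. \<forall>j<k. i \<noteq> j \<longrightarrow> Pi i \<inter> Pi j = {}) \<and>
     (\<forall>i<k. card (Pi i) = n) \<and>
     (\<forall>i<k. \<forall>l\<in>Pi i. \<forall>m\<in>Pi i. l \<noteq> m \<longrightarrow> l \<inter> m = {}) \<and>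
     (\<forall>i<k. \<forall>j<k. i \<noteq> j \<longrightarrow> (\<forall>l\<in>Pi i. \<forall>m\<in>Pi j. card (l \<inter> m) = 1))"

definition is_relation :: "'p set \<Rightarrow> 'p set set \<Rightarrow> 'p set set \<Rightarrow> bool" where
  "is_relation P L R \<longleftrightarrow> R \<subseteq> L \<and> (\<forall>p\<in>P. even (card {l\<in>R. p \<in> l}))"

definition rel_type :: "(nat \<Rightarrow> 'p set set) \<Rightarrow> 'p set set \<Rightarrow> nat \<Rightarrow> nat" where
  "rel_type Pi R i = card (R \<inter> Pi i)"

definition point_type :: "nat \<Rightarrow> (nat \<Rightarrow> 'p set set) \<Rightarrow> 'p set set \<Rightarrow> 'p \<Rightarrow> (nat \<Rightarrow> nat) \<Rightarrow> bool" where
  "point_type k Pi R p b \<longleftrightarrow> (\<forall>i<k. b i = (if (\<exists>l\<in>Pi i \<inter> R. p \<in> l) then 1 else 0))"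

definition t_count :: "nat \<Rightarrow> 'p set \<Rightarrow> (nat \<Rightarrow> 'p set set) \<Rightarrow> 'p set set \<Rightarrow> (nat \<Rightarrow> nat) \<Rightarrow> nat" where
  "t_count k P Pi R b = card {p\<in>P. point_type k Pi R p b}"

end

theory Submission imports Defs begin

lemma all4: "(\<forall>i<(4::nat). Q i) \<longleftrightarrow> Q 0 \<and> Q 1 \<and> Q 2 \<and> Q 3"
  by (auto simp: numeral_eq_Suc less_Suc_eq)

lemma sum4: "(\<Sum>i<(4::nat). f i) = f 0 + f 1 + f 2 + f 3"
  by (simp add: numeral_eq_Suc)

lemma sum4x: "(\<Sum>i<(4::nat). \<Sum>j\<in>{i<..<4}. f i j) = f 0 1 + f 0 2 + f 0 3 + f 1 2 + f 1 3 + f 2 (3::nat)"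
proof -
  have a: "{0<..<4::nat} = {1,2,3}" "{1<..<4::nat} = {2,3}" "{2<..<4::nat} = {3}" "{3<..<4::nat} = {}"
    by auto
  have "(\<Sum>i<(4::nat). \<Sum>j\<in>{i<..<4}. f i j) = sum (f 0) {0<..<4} + sum (f 1) {1<..<4} + sum (f 2) {2<..<4} + sum (f 3) {3<..<4}"
    by (rule sum4)
  also have "\<dots> = f 0 1 + f 0 2 + f 0 3 + f 1 2 + f 1 3 + f 2 (3::nat)"
    unfolding a by (simp add: add.assoc)
  finally show ?thesis .
qed

lemma sum_ind: "finite A \<Longrightarrow> (\<Sum>p\<in>A. if Q p then 1 else 0 :: real) = real (card {p\<in>A. Q p})"
  by (simp add: sum.If_cases Collect_conj_eq Int_commute Collect_mem_eq)

lemma dist1: fixes s :: "nat \<Rightarrow> 'p \<Rightarrow> real" shows "(\<Sum>p\<in>A. c * (\<Sum>i\<in>I. e i * s i p)) = c * (\<Sum>i\<in>I. e i * (\<Sum>p\<in>A. s i p))"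
  by (simp add: sum_distrib_left sum.swap[of _ A])

lemma dist2: fixes s :: "nat \<Rightarrow> 'p \<Rightarrow> real" shows "(\<Sum>p\<in>A. (\<Sum>i\<in>I. \<Sum>j\<in>J i. e i j * s i p * s j p)) = (\<Sum>i\<in>I. \<Sum>j\<in>J i. e i j * (\<Sum>p\<in>A. s i p * s j p))"
proof -
  have "(\<Sum>p\<in>A. (\<Sum>i\<in>I. \<Sum>j\<in>J i. e i j * s i p * s j p)) = (\<Sum>i\<in>I. \<Sum>p\<in>A. \<Sum>j\<in>J i. e i j * s i p * s j p)"
    by (rule sum.swap)
  also have "\<dots> = (\<Sum>i\<in>I. \<Sum>j\<in>J i. \<Sum>p\<in>A. e i j * s i p * s j p)"
    by (rule sum.cong[OF refl], rule sum.swap)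
  also have "\<dots> = (\<Sum>i\<in>I. \<Sum>j\<in>J i. e i j * (\<Sum>p\<in>A. s i p * s j p))"
    by (simp add: sum_distrib_left mult.assoc)
  finally show ?thesis .
qed

lemma pw0:
  fixes a0 a1 a2 a3 b0 b1 b2 b3 :: nat
  assumes "a0 \<in> {0,1}" "a1 \<in> {0,1}" "a2 \<in> {0,1}" "a3 \<in> {0,1}"
   "b0 \<in> {0,1}" "b1 \<in> {0,1}" "b2 \<in> {0,1}" "b3 \<in> {0,1}"
   "even (a0+a1+a2+a3)" "even (b0+b1+b2+b3)"
  shows "(if b0 = a0 \<and> b1 = a1 \<and> b2 = a2 \<and> b3 = a3 then 1 else 0::real) =
    (2 + 2*((-1)^b0 * (1 - 2*real a0) + (-1)^b1 * (1 - 2*real a1) + (-1)^b2 * (1 - 2*real a2) + (-1)^b3 * (1 - 2*real a3))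
     + ((-1)^(b0+b1) * (1 - 2*real a0) * (1 - 2*real a1) + (-1)^(b0+b2) * (1 - 2*real a0) * (1 - 2*real a2)
      + (-1)^(b0+b3) * (1 - 2*real a0) * (1 - 2*real a3) + (-1)^(b1+b2) * (1 - 2*real a1) * (1 - 2*real a2)
      + (-1)^(b1+b3) * (1 - 2*real a1) * (1 - 2*real a3) + (-1)^(b2+b3) * (1 - 2*real a2) * (1 - 2*real a3)))/16"
  using assms by auto

lemma net_facts:
  assumes "is_net 4 n P L Pi"
  shows "finite P" "card P = n^2" "\<And>l. l \<in> L \<Longrightarrow> l \<subseteq> P \<and> card l = n"
    "L = (\<Union>i<4. Pi i)" "\<And>i j. i<4 \<Longrightarrow> j<4 \<Longrightarrow> i \<noteq> j \<Longrightarrow> Pi i \<inter> Pi j = {}"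
    "\<And>i l m. i<4 \<Longrightarrow> l\<in>Pi i \<Longrightarrow> m\<in>Pi i \<Longrightarrow> l \<noteq> m \<Longrightarrow> l \<inter> m = {}"
    "\<And>i j l m. i<4 \<Longrightarrow> j<4 \<Longrightarrow> i \<noteq> j \<Longrightarrow> l\<in>Pi i \<Longrightarrow> m\<in>Pi j \<Longrightarrow> card (l \<inter> m) = 1"
    "finite L"
proof -
  note H = assms[unfolded is_net_def]
  show "finite P" "card P = n^2" using H by auto
  show "\<And>l. l \<in> L \<Longrightarrow> l \<subseteq> P \<and> card l = n" using H by auto
  show "L = (\<Union>i<4. Pi i)" using H by (elim conjE) assumption
  show "\<And>i j. i<4 \<Longrightarrow> j<4 \<Longrightarrow> i \<noteq> j \<Longrightarrow> Pi i \<inter> Pi j = {}" using H by (elim conjE) simp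
  show "\<And>i l m. i<4 \<Longrightarrow> l\<in>Pi i \<Longrightarrow> m\<in>Pi i \<Longrightarrow> l \<noteq> m \<Longrightarrow> l \<inter> m = {}" using H by (elim conjE) simp
  show "\<And>i j l m. i<4 \<Longrightarrow> j<4 \<Longrightarrow> i \<noteq> j \<Longrightarrow> l\<in>Pi i \<Longrightarrow> m\<in>Pi j \<Longrightarrow> card (l \<inter> m) = 1" using H by (elim conjE) simp
  have "\<And>l. l \<in> L \<Longrightarrow> l \<subseteq> P" using H by auto
  then have "L \<subseteq> Pow P" by blast
  then show "finite L" using \<open>finite P\<close> finite_subset by blast
qed

theorem mainTheorem3:
  fixes n :: nat and P :: "'p set" and L :: "'p set set" and Pi :: "nat \<Rightarrow> 'p set set"
    and R :: "'p set set" and b :: "nat \<Rightarrow> nat"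
  assumes "even n"
    and "is_net 4 n P L Pi"
    and "is_relation P L R"
    and "\<forall>i<4. b i \<in> {0, 1}"
    and "even (\<Sum>i<4. b i)"
  shows "(let g = (\<lambda>i. real n / 2 - real (rel_type Pi R i)) in
          real (t_count 4 P Pi R b) =
            (real n)^2 / 8
            + real n / 4 * (\<Sum>i<4. (-1)^(b i) * g i)
            + 1/4 * (\<Sum>i<4. \<Sum>j\<in>{i<..<4}. (-1)^(b i + b j) * g i * g j))"
proof -
  note N = net_facts[OF assms(2)]
  have RL: "R \<subseteq> L" and ev: "\<And>p. p\<in>P \<Longrightarrow> even (card {l\<in>R. p \<in> l})"
    using assms(3) unfolding is_relation_def by auto
  have finR: "finite R" using RL N(8) finite_subset by blast
  have PiL: "Pi i \<subseteq> L" if "i < 4" for i using that by (simp add: N(4)) blast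
  have RU: "R \<subseteq> (\<Union>i<4. Pi i)" using RL by (simp add: N(4))
  have finPi: "\<And>i. i < 4 \<Longrightarrow> finite (Pi i)" using PiL N(8) finite_subset by blast
  have lP: "\<And>l i. i < 4 \<Longrightarrow> l \<in> Pi i \<Longrightarrow> l \<subseteq> P" using PiL N(3) by blast
  have lc: "\<And>l i. i < 4 \<Longrightarrow> l \<in> Pi i \<Longrightarrow> card l = n" using PiL N(3) by blast
  have lf: "\<And>l i. i < 4 \<Longrightarrow> l \<in> Pi i \<Longrightarrow> finite l" using lP N(1) finite_subset by blast
  define Q where "Q i p \<longleftrightarrow> (\<exists>l\<in>Pi i \<inter> R. p \<in> l)" for i p
  define x where "x i p = (if Q i p then 1 else 0::nat)" for i p
  define lam where "lam i = rel_type Pi R i" for i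
  have lam': "lam i = card (Pi i \<inter> R)" for i unfolding lam_def rel_type_def by (simp add: Int_commute)
  have count1: "(\<Sum>p\<in>P. real (x i p)) = real (lam i * n)" if i: "i < 4" for i
  proof -
    have "(\<Sum>p\<in>P. real (x i p)) = real (card {p\<in>P. Q i p})"
      using sum_ind[OF N(1), of "Q i"] unfolding x_def by (simp add: if_distrib cong: if_cong)
    also have "{p\<in>P. Q i p} = \<Union>(Pi i \<inter> R)"
      unfolding Q_def using lP i by blast
    also have "card (\<Union>(Pi i \<inter> R)) = (\<Sum>l\<in>Pi i \<inter> R. card l)"
    proof (rule card_Union_disjoint)
      show "pairwise disjnt (Pi i \<inter> R)" unfolding pairwise_def disjnt_def using N(6) i by blast
      show "\<And>A. A \<in> Pi i \<inter> R \<Longrightarrow> finite A" using lf i by blast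
    qed
    also have "\<dots> = (\<Sum>l\<in>Pi i \<inter> R. n)" using lc i by (intro sum.cong) auto
    also have "\<dots> = lam i * n" by (simp add: lam')
    finally show ?thesis .
  qed
  have count2: "(\<Sum>p\<in>P. real (x i p) * real (x j p)) = real (lam i * lam j)"
    if i: "i < 4" and j: "j < 4" and ij: "i \<noteq> j" for i j
  proof -
    have "(\<Sum>p\<in>P. real (x i p) * real (x j p)) = real (card {p\<in>P. Q i p \<and> Q j p})"
    proof -
      have "(\<Sum>p\<in>P. real (x i p) * real (x j p)) = (\<Sum>p\<in>P. if Q i p \<and> Q j p then 1 else 0)"
        unfolding x_def by (rule sum.cong) auto
      then show ?thesis using sum_ind[OF N(1), of "\<lambda>p. Q i p \<and> Q j p"] by simp
    qed
    also have "{p\<in>P. Q i p \<and> Q j p} = (\<Union>a\<in>(Pi i \<inter> R) \<times> (Pi j \<inter> R). fst a \<inter> snd a)"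
    proof (rule set_eqI, rule iffI)
      fix p assume "p \<in> {p\<in>P. Q i p \<and> Q j p}"
      then obtain l m where "l \<in> Pi i \<inter> R" "m \<in> Pi j \<inter> R" "p \<in> l" "p \<in> m" unfolding Q_def by blast
      then show "p \<in> (\<Union>a\<in>(Pi i \<inter> R) \<times> (Pi j \<inter> R). fst a \<inter> snd a)"
        by (intro UN_I[of "(l,m)"]) auto
    next
      fix p assume "p \<in> (\<Union>a\<in>(Pi i \<inter> R) \<times> (Pi j \<inter> R). fst a \<inter> snd a)"
      then obtain a where a: "a \<in> (Pi i \<inter> R) \<times> (Pi j \<inter> R)" "p \<in> fst a" "p \<in> snd a" by blast
      then have "fst a \<in> Pi i \<inter> R" "snd a \<in> Pi j \<inter> R" by auto
      then show "p \<in> {p\<in>P. Q i p \<and> Q j p}" using a lP[OF i, of "fst a"] unfolding Q_def by blast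
    qed
    also have "card \<dots> = (\<Sum>a\<in>(Pi i \<inter> R) \<times> (Pi j \<inter> R). card (fst a \<inter> snd a))"
    proof (rule card_UN_disjoint)
      show "finite ((Pi i \<inter> R) \<times> (Pi j \<inter> R))" using finR by simp
      show "\<forall>a\<in>(Pi i \<inter> R) \<times> (Pi j \<inter> R). finite (fst a \<inter> snd a)"
      proof
        fix a assume "a \<in> (Pi i \<inter> R) \<times> (Pi j \<inter> R)"
        then have "fst a \<in> Pi i" by auto
        then show "finite (fst a \<inter> snd a)" using lf[OF i] by blast
      qed
      show "\<forall>a\<in>(Pi i \<inter> R) \<times> (Pi j \<inter> R). \<forall>c\<in>(Pi i \<inter> R) \<times> (Pi j \<inter> R). a \<noteq> c \<longrightarrow>
          (fst a \<inter> snd a) \<inter> (fst c \<inter> snd c) = {}"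
      proof (intro ballI impI)
        fix a c
        assume A: "a \<in> (Pi i \<inter> R) \<times> (Pi j \<inter> R)" "c \<in> (Pi i \<inter> R) \<times> (Pi j \<inter> R)" "a \<noteq> c"
        obtain l m where lm: "a = (l,m)" by (cases a)
        obtain l' m' where lm': "c = (l',m')" by (cases c)
        have l: "l \<in> Pi i" "l' \<in> Pi i" "m \<in> Pi j" "m' \<in> Pi j" "(l,m) \<noteq> (l',m')"
          using A unfolding lm lm' by auto
        show "(fst a \<inter> snd a) \<inter> (fst c \<inter> snd c) = {}"
        proof (cases "l = l'")
          case True
          then have "m \<inter> m' = {}" using l N(6)[OF j, of m m'] by simp
          then show ?thesis unfolding lm lm' by auto
        next
          case False
          then have "l \<inter> l' = {}" using l N(6)[OF i, of l l'] by simp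
          then show ?thesis unfolding lm lm' by auto
        qed
      qed
    qed
    also have "\<dots> = (\<Sum>_\<in>(Pi i \<inter> R) \<times> (Pi j \<inter> R). 1)"
      using N(7)[OF i j ij] by (intro sum.cong) auto
    also have "\<dots> = lam i * lam j" by (simp add: lam' card_cartesian_product)
    finally show ?thesis by simp
  qed
  have par: "even (\<Sum>i<4. x i p)" if p: "p \<in> P" for p
  proof -
    have U: "{l\<in>R. p \<in> l} = (\<Union>i<4. {l\<in>Pi i \<inter> R. p \<in> l})" using RU by blast
    have "card {l\<in>R. p \<in> l} = card (\<Union>i<4. {l\<in>Pi i \<inter> R. p \<in> l})" using U by (rule arg_cong)
    also have "\<dots> = (\<Sum>i<4. card {l\<in>Pi i \<inter> R. p \<in> l})"
    proof (rule card_UN_disjoint)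
      show "finite {..<4::nat}" by simp
      show "\<forall>i\<in>{..<4::nat}. finite {l\<in>Pi i \<inter> R. p \<in> l}" using finPi by auto
      show "\<forall>i\<in>{..<4::nat}. \<forall>j\<in>{..<4}. i \<noteq> j \<longrightarrow> {l\<in>Pi i \<inter> R. p \<in> l} \<inter> {l\<in>Pi j \<inter> R. p \<in> l} = {}"
      proof (intro ballI impI)
        fix i j :: nat assume "i \<in> {..<4}" "j \<in> {..<4}" "i \<noteq> j"
        then have "Pi i \<inter> Pi j = {}" using N(5) by simp
        then show "{l\<in>Pi i \<inter> R. p \<in> l} \<inter> {l\<in>Pi j \<inter> R. p \<in> l} = {}" by blast
      qed
    qed
    also have "\<dots> = (\<Sum>i<4. x i p)"
    proof (rule sum.cong[OF refl])
      fix i assume "i \<in> {..<4::nat}"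
      then have i: "i < 4" by simp
      show "card {l\<in>Pi i \<inter> R. p \<in> l} = x i p"
      proof (cases "Q i p")
        case True
        then obtain l0 where l0: "l0 \<in> Pi i \<inter> R" "p \<in> l0" unfolding Q_def by blast
        have "{l\<in>Pi i \<inter> R. p \<in> l} = {l0}" using l0 N(6)[OF i, of l0] by blast
        then show ?thesis using True unfolding x_def by simp
      next
        case False
        then have E: "{l\<in>Pi i \<inter> R. p \<in> l} = {}" unfolding Q_def by blast
        show ?thesis using False unfolding x_def E by simp
      qed
    qed
    finally show ?thesis using ev[OF p] by simp
  qed
  define s where "s i p = 1 - 2 * real (x i p)" for i p
  define e where "e i = ((-1::real)^(b i))" for i
  define c where "c i j = ((-1::real)^(b i + b j))" for i j
  have pw: "(if (\<forall>i<4. b i = x i p) then 1 else 0::real) =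
    (2 + 2*(\<Sum>i<4. e i * s i p) + (\<Sum>i<4. \<Sum>j\<in>{i<..<4}. c i j * s i p * s j p))/16"
    if p: "p \<in> P" for p
  proof -
    have xb: "x i p \<in> {0,1}" for i unfolding x_def by simp
    have B: "b 0 \<in> {0,1}" "b 1 \<in> {0,1}" "b 2 \<in> {0,1}" "b 3 \<in> {0,1}"
      using assms(4) unfolding all4 by blast+
    have E1: "even (x 0 p + x 1 p + x 2 p + x 3 p)" using par[OF p] unfolding sum4 .
    have E2: "even (b 0 + b 1 + b 2 + b 3)" using assms(5) unfolding sum4 .
    note inst = pw0[OF xb xb xb xb B E1 E2]
    show ?thesis
      unfolding all4 sum4x sum4 e_def c_def s_def by (rule inst)
  qed
  have pt: "point_type 4 Pi R p b \<longleftrightarrow> (\<forall>i<4. b i = x i p)" for p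
    unfolding point_type_def x_def Q_def by simp
  have "real (t_count 4 P Pi R b) = (\<Sum>p\<in>P. if (\<forall>i<4. b i = x i p) then 1 else 0::real)"
    unfolding t_count_def pt using sum_ind[OF N(1)] by simp
  also have "\<dots> = (\<Sum>p\<in>P. (2 + 2*(\<Sum>i<4. e i * s i p) + (\<Sum>i<4. \<Sum>j\<in>{i<..<4}. c i j * s i p * s j p))/16)"
    using pw by (rule sum.cong[OF refl])
  also have "\<dots> = ((\<Sum>p\<in>P. 2) + (\<Sum>p\<in>P. 2*(\<Sum>i<4. e i * s i p)) + (\<Sum>p\<in>P. \<Sum>i<4. \<Sum>j\<in>{i<..<4}. c i j * s i p * s j p))/16"
    by (simp add: sum_divide_distrib[symmetric] sum.distrib)
  also have "\<dots> = (2 * real n ^ 2 + 2*(\<Sum>i<4. e i * (\<Sum>p\<in>P. s i p)) + (\<Sum>i<4. \<Sum>j\<in>{i<..<4}. c i j * (\<Sum>p\<in>P. s i p * s j p)))/16"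
    by (simp only: dist1 dist2) (simp add: N(2))
  also have "\<dots> = (2 * real n ^ 2 + 2*(\<Sum>i<4. e i * (real n ^ 2 - 2 * real (lam i * n))) + (\<Sum>i<4. \<Sum>j\<in>{i<..<4}. c i j * 
       (real n ^ 2 - 2 * real (lam i * n) - 2 * real (lam j * n) + 4 * real (lam i * lam j))))/16"
  proof -
    have s1: "(\<Sum>p\<in>P. s i p) = real n ^ 2 - 2 * real (lam i * n)" if "i < 4" for i
      unfolding s_def using count1[OF that] N(2)
      by (simp add: sum_subtractf sum_distrib_left[symmetric])
    have s2: "(\<Sum>p\<in>P. s i p * s j p) = real n ^ 2 - 2 * real (lam i * n) - 2 * real (lam j * n) + 4 * real (lam i * lam j)"
      if "i < 4" "j < 4" "i \<noteq> j" for i j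
    proof -
      have "(\<Sum>p\<in>P. s i p * s j p) = (\<Sum>p\<in>P. 1 - 2 * real (x i p) - 2 * real (x j p) + 4 * (real (x i p) * real (x j p)))"
        unfolding s_def by (rule sum.cong) (auto simp: algebra_simps)
      also have "\<dots> = real n ^ 2 - 2 * real (lam i * n) - 2 * real (lam j * n) + 4 * real (lam i * lam j)"
        using count1[OF that(1)] count1[OF that(2)] count2[OF that] N(2)
        by (simp add: sum.distrib sum_subtractf sum_distrib_left[symmetric])
      finally show ?thesis .
    qed
    show ?thesis
      using s1 s2 by (intro arg_cong2[where f="(/)"] refl arg_cong2[where f="(+)"] arg_cong2[where f="(*)"] sum.cong) auto
  qed
  finally have main: "real (t_count 4 P Pi R b) = \<dots>" .
  show ?thesis
    unfolding Let_def main sum4x sum4 e_def[symmetric] c_def[symmetric] lam_def[symmetric] of_nat_mult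
    by (simp add: field_simps power2_eq_square)
qed

end
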